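(* For a rectangular element $K=[x_1,x_2]\times[y_1,y_2]$ of a regular rectangular partition $T_h$, with vertices $P_1=(x_1,y_1)$, $P_2=(x_2,y_1)$, $P_3=(x_2,y_2)$, $P_4=(x_1,y_2)$, and for $w_h\in U_h$ with $w_i=w_h(P_i)$, define $$|w_h|_{1,h,K}^2=(w_2-w_1)^2+(w_3-w_2)^2+(w_3-w_4)^2+(w_4-w_1)^2,\qquad |w_h|_{1,h}=\Big(\sum_{K\in T_h}|w_h|_{1,h,K}^2\Big)^{1/2}.$$ Then for every $K\in T_h$ and every $w_h\in U_h$, $$\frac{1}{6\gamma}|w_h|_{1,h,K}^2\le|w_h|_{1,K}^2\le\frac{\gamma}{2}|w_h|_{1,h,K}^2;$$ in particular $|\cdot|_{1,h}$ is equivalent to $|\cdot|_1$ on $U_h$.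
   Context: $\Omega\subset\mathbb{R}^2$ is an open rectangle. $T_h$ is a conforming partition of $\overline\Omega$ into closed rectangles with sides parallel to the axes; $h_K$ is the diameter of $K$, $\rho_K$ the diameter of the largest ball contained in $K$, and regularity means $h_K/\rho_K\le\gamma$ for all $K\in T_h$. $U_h=\{v\in C^0(\overline\Omega): v|_K\in Q_1(K)\ \forall K,\ v|_{\partial\Omega}=0\}$ ($Q_1$ = bilinear polynomials). $|w|_{1,K}^2=\int_K|\nabla w|^2$ and $|w|_1^2=\int_\Omega|\nabla w|^2$. *)

theory Defs
  imports "HOL-Analysis.Analysis"
begin

definition xlo :: "(real \<times> real) set \<Rightarrow> real" where "xlo K = Inf (fst ` K)"
definition xhi :: "(real \<times> real) set \<Rightarrow> real" where "xhi K = Sup (fst ` K)"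
definition ylo :: "(real \<times> real) set \<Rightarrow> real" where "ylo K = Inf (snd ` K)"
definition yhi :: "(real \<times> real) set \<Rightarrow> real" where "yhi K = Sup (snd ` K)"

definition is_rect :: "(real \<times> real) set \<Rightarrow> bool" where
  "is_rect K \<longleftrightarrow> (\<exists>x1 x2 y1 y2. x1 < x2 \<and> y1 < y2 \<and> K = {x1..x2} \<times> {y1..y2})"

definition rect_vertices :: "(real \<times> real) set \<Rightarrow> (real \<times> real) set" where
  "rect_vertices K = {(xlo K, ylo K), (xhi K, ylo K), (xhi K, yhi K), (xlo K, yhi K)}"

definition rect_edges :: "(real \<times> real) set \<Rightarrow> (real \<times> real) set set" where
  "rect_edges K = {{xlo K..xhi K} \<times> {ylo K}, {xhi K} \<times> {ylo K..yhi K},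
                   {xlo K..xhi K} \<times> {yhi K}, {xlo K} \<times> {ylo K..yhi K}}"

definition conforming_rect_partition ::
  "(real \<times> real) set set \<Rightarrow> (real \<times> real) set \<Rightarrow> bool" where
  "conforming_rect_partition T \<Omega> \<longleftrightarrow>
     finite T \<and> (\<forall>K\<in>T. is_rect K) \<and> \<Union>T = closure \<Omega> \<and>
     (\<forall>K\<in>T. \<forall>K'\<in>T. K \<noteq> K' \<longrightarrow>
        interior K \<inter> interior K' = {} \<and>
        (K \<inter> K' = {} \<or>
         (\<exists>v \<in> rect_vertices K \<inter> rect_vertices K'. K \<inter> K' = {v}) \<or>
         K \<inter> K' \<in> rect_edges K \<inter> rect_edges K'))"

definition rho :: "(real \<times> real) set \<Rightarrow> real" where
  "rho K = Sup {diameter (cball z r) | z r. 0 < r \<and> cball z r \<subseteq> K}"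

definition Q1 :: "(real \<times> real \<Rightarrow> real) set" where
  "Q1 = {q. \<exists>c0 c1 c2 c3. \<forall>x y. q (x, y) = c0 + c1 * x + c2 * y + c3 * x * y}"

definition Uh :: "(real \<times> real) set set \<Rightarrow> (real \<times> real) set \<Rightarrow> (real \<times> real \<Rightarrow> real) set" where
  "Uh T \<Omega> = {v. continuous_on (closure \<Omega>) v \<and>
                 (\<forall>K\<in>T. \<exists>q\<in>Q1. \<forall>p\<in>K. v p = q p) \<and>
                 (\<forall>p\<in>frontier \<Omega>. v p = 0)}"

definition grad_sq :: "(real \<times> real \<Rightarrow> real) \<Rightarrow> real \<times> real \<Rightarrow> real" where
  "grad_sq w p = (deriv (\<lambda>t. w (t, snd p)) (fst p))\<^sup>2 + (deriv (\<lambda>t. w (fst p, t)) (snd p))\<^sup>2"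

definition semi1K_sq :: "(real \<times> real \<Rightarrow> real) \<Rightarrow> (real \<times> real) set \<Rightarrow> real" where
  "semi1K_sq w K = integral K (grad_sq w)"

definition semi1 :: "(real \<times> real \<Rightarrow> real) \<Rightarrow> (real \<times> real) set \<Rightarrow> real" where
  "semi1 w \<Omega> = sqrt (integral \<Omega> (grad_sq w))"

definition semi1hK_sq :: "(real \<times> real \<Rightarrow> real) \<Rightarrow> (real \<times> real) set \<Rightarrow> real" where
  "semi1hK_sq w K =
     (let w1 = w (xlo K, ylo K); w2 = w (xhi K, ylo K);
          w3 = w (xhi K, yhi K); w4 = w (xlo K, yhi K)
      in (w2 - w1)\<^sup>2 + (w3 - w2)\<^sup>2 + (w3 - w4)\<^sup>2 + (w4 - w1)\<^sup>2)"

definition semi1h :: "(real \<times> real \<Rightarrow> real) \<Rightarrow> (real \<times> real) set set \<Rightarrow> real" where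
  "semi1h w T = sqrt (\<Sum>K\<in>T. semi1hK_sq w K)"

end

theory Submission
  imports Defs
begin

lemma rect_bounds:
  assumes "x1 < x2" "y1 < y2" "K = {x1..x2}\<times>{y1..y2::real}"
  shows "xlo K = x1" "xhi K = x2" "ylo K = y1" "yhi K = y2"
  using assms by (auto simp: xlo_def xhi_def ylo_def yhi_def)

lemma rho_le:
  assumes "x1 < x2" "y1 < y2" "K = {x1..x2}\<times>{y1..y2::real}"
  shows "0 < rho K" "rho K \<le> x2 - x1" "rho K \<le> y2 - y1"
proof -
  let ?S = "{diameter (cball z r) | z r. 0 < r \<and> cball z r \<subseteq> K}"
  have ub: "d \<le> min (x2-x1) (y2-y1)" if dS: "d \<in> ?S" for d
  proof -
    obtain z :: "real\<times>real" and r where zr: "d = diameter (cball z r)" "0 < r" "cball z r \<subseteq> K" using dS by blast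
    obtain a b where z: "z = (a,b)" by fastforce
    have "(a+r,b) \<in> cball z r" "(a-r,b) \<in> cball z r" "(a,b+r) \<in> cball z r" "(a,b-r) \<in> cball z r"
      using zr(2) by (auto simp: z dist_Pair_Pair dist_real_def)
    then have "(a+r,b) \<in> K" "(a-r,b) \<in> K" "(a,b+r) \<in> K" "(a,b-r) \<in> K" using zr(3) by auto
    then show ?thesis using zr(1,2) assms(3) by auto
  qed
  let ?m = "min (x2-x1) (y2-y1)"
  have mem: "?m \<in> ?S"
  proof -
    have "cball ((x1+x2)/2, (y1+y2)/2) (?m/2) \<subseteq> K"
    proof
      fix p assume "p \<in> cball ((x1+x2)/2, (y1+y2)/2) (?m/2)"
      then have dp: "dist ((x1+x2)/2, (y1+y2)/2) p \<le> ?m/2" by simp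
      obtain u v where p: "p = (u,v)" by fastforce
      have "dist ((x1+x2)/2) u \<le> dist ((x1+x2)/2, (y1+y2)/2) p"
        using dist_fst_le[of "((x1+x2)/2, (y1+y2)/2)" p] p by simp
      moreover have "dist ((y1+y2)/2) v \<le> dist ((x1+x2)/2, (y1+y2)/2) p"
        using dist_snd_le[of "((x1+x2)/2, (y1+y2)/2)" p] p by simp
      ultimately have du: "dist ((x1+x2)/2) u \<le> ?m/2" and dv: "dist ((y1+y2)/2) v \<le> ?m/2"
        using dp by auto
      have mm: "?m/2 \<le> (x2-x1)/2" by simp
      have hu: "\<bar>(x1+x2)/2 - u\<bar> \<le> (x2-x1)/2"
        using order_trans[OF du mm] unfolding dist_real_def .
      have mm2: "?m/2 \<le> (y2-y1)/2" by simp
      have hv: "\<bar>(y1+y2)/2 - v\<bar> \<le> (y2-y1)/2"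
        using order_trans[OF dv mm2] unfolding dist_real_def .
      have "x1 \<le> u" using conjunct1[OF hu[unfolded abs_le_iff]] by argo
      moreover have "u \<le> x2" using conjunct2[OF hu[unfolded abs_le_iff]] by argo
      moreover have "y1 \<le> v" using conjunct1[OF hv[unfolded abs_le_iff]] by argo
      moreover have "v \<le> y2" using conjunct2[OF hv[unfolded abs_le_iff]] by argo
      ultimately show "p \<in> K" using assms p by auto
    qed
    moreover have "diameter (cball ((x1+x2)/2, (y1+y2)/2) (?m/2)) = ?m" using assms by simp
    moreover have "0 < ?m/2" using assms by simp
    ultimately show ?thesis by (metis (mono_tags, lifting) mem_Collect_eq)
  qed
  have bdd: "bdd_above ?S" using ub by (meson bdd_aboveI)
  have "rho K = Sup ?S" by (simp add: rho_def)
  moreover have "Sup ?S \<le> ?m" using ub mem by (intro cSup_least) auto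
  moreover have "?m \<le> Sup ?S" using mem bdd by (rule cSup_upper)
  ultimately show "0 < rho K" "rho K \<le> x2 - x1" "rho K \<le> y2 - y1" using assms by auto
qed

lemma gamma_bounds:
  assumes "x1 < x2" "y1 < y2" "K = {x1..x2}\<times>{y1..y2::real}" "diameter K / rho K \<le> g"
  shows "x2 - x1 \<le> g * (y2 - y1)" "y2 - y1 \<le> g * (x2 - x1)"
proof -
  have r: "0 < rho K" "rho K \<le> x2 - x1" "rho K \<le> y2 - y1" using rho_le[OF assms(1-3)] by auto
  have bK: "bounded K" using assms(3) by (simp add: bounded_Times)
  have m: "(x1,y1) \<in> K" "(x2,y1) \<in> K" "(x1,y2) \<in> K" using assms by auto
  have "dist (x1,y1) (x2,y1) \<le> diameter K" "dist (x1,y1) (x1,y2) \<le> diameter K"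
    using diameter_bounded_bound[OF bK] m by auto
  then have d: "x2 - x1 \<le> diameter K" "y2 - y1 \<le> diameter K" using assms
    by (auto simp: dist_Pair_Pair dist_real_def)
  have "diameter K \<le> g * rho K" using assms(4) r(1) by (simp add: divide_le_eq)
  moreover have "g \<ge> 0"
  proof -
    have "0 \<le> diameter K / rho K" using d assms r by simp
    then show ?thesis using assms(4) by linarith
  qed
  ultimately show "x2 - x1 \<le> g * (y2 - y1)" "y2 - y1 \<le> g * (x2 - x1)"
    using d r mult_left_mono[OF r(2), of g] mult_left_mono[OF r(3), of g] by linarith+
qed

lemma ineq:
  fixes hx hy g A B C D :: real
  assumes "0 < hx" "0 < hy" "hx \<le> g * hy" "hy \<le> g * hx"
  defines "I \<equiv> hx*hy*((A^2+A*B+B^2)/3 + (C^2+C*D+D^2)/3)"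
    and "S \<equiv> hx^2*(A^2+B^2) + hy^2*(C^2+D^2)"
  shows "1/(6*g) * S \<le> I" "I \<le> g/2 * S"
proof -
  have g: "0 < g"
  proof (rule ccontr)
    assume "\<not> 0 < g"
    then have "g * hy \<le> 0" using assms(2) by (simp add: mult_nonpos_nonneg)
    then show False using assms(1,3) by linarith
  qed
  have p1: "(A^2+B^2)/2 \<le> A^2+A*B+B^2" "A^2+A*B+B^2 \<le> 3*(A^2+B^2)/2"
    using zero_le_power2[of "A+B"] zero_le_power2[of "A-B"]
    by (simp_all add: power2_eq_square algebra_simps)
  have p2: "(C^2+D^2)/2 \<le> C^2+C*D+D^2" "C^2+C*D+D^2 \<le> 3*(C^2+D^2)/2"
    using zero_le_power2[of "C+D"] zero_le_power2[of "C-D"]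
    by (simp_all add: power2_eq_square algebra_simps)
  have a0: "0 \<le> A^2+B^2" "0 \<le> C^2+D^2" by simp_all
  have hh: "0 \<le> hx*hy" using assms by simp
  have gh: "0 \<le> g*(hx*hy)" using g hh by simp
  have h1: "hx^2 \<le> g*(hx*hy)" using mult_left_mono[OF assms(3), of hx] assms(1)
    by (simp add: power2_eq_square algebra_simps)
  have h2: "hy^2 \<le> g*(hx*hy)" using mult_left_mono[OF assms(4), of hy] assms(2)
    by (simp add: power2_eq_square algebra_simps)
  have h3: "hx*hy \<le> g*hx^2" using mult_left_mono[OF assms(4), of hx] assms(1)
    by (simp add: power2_eq_square algebra_simps)
  have h4: "hx*hy \<le> g*hy^2" using mult_left_mono[OF assms(3), of hy] assms(2)
    by (simp add: power2_eq_square algebra_simps)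
  define X where "X = A^2+B^2"
  define Y where "Y = C^2+D^2"
  define P where "P = A^2+A*B+B^2"
  define Q where "Q = C^2+C*D+D^2"
  have I2: "I = hx*hy*P/3 + hx*hy*Q/3" unfolding I_def P_def Q_def by (simp add: algebra_simps)
  have S2: "S = hx^2*X + hy^2*Y" unfolding S_def X_def Y_def ..
  have pX1: "X \<le> 2*P" using p1(1) unfolding X_def P_def by (simp add: field_simps)
  have pX2: "P \<le> 3*X/2" using p1(2) unfolding X_def P_def by (simp add: field_simps)
  have pY1: "Y \<le> 2*Q" using p2(1) unfolding Y_def Q_def by (simp add: field_simps)
  have pY2: "Q \<le> 3*Y/2" using p2(2) unfolding Y_def Q_def by (simp add: field_simps)
  note pX = pX1 pX2 and pY = pY1 pY2
  have X0: "0 \<le> X" "0 \<le> Y" using a0 unfolding X_def Y_def by auto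
  have l1: "hx^2*X \<le> g*(hx*hy)*X" by (rule mult_right_mono[OF h1 X0(1)])
  have l2: "hy^2*Y \<le> g*(hx*hy)*Y" by (rule mult_right_mono[OF h2 X0(2)])
  have l3: "g*(hx*hy)*X \<le> g*(hx*hy)*(2*P)" by (rule mult_left_mono[OF pX(1) gh])
  have l4: "g*(hx*hy)*Y \<le> g*(hx*hy)*(2*Q)" by (rule mult_left_mono[OF pY(1) gh])
  have "S \<le> (6*g) * I" unfolding S2 I2 using l1 l2 l3 l4 by (simp add: algebra_simps)
  then have "S / (6*g) \<le> I" using g by (simp add: divide_le_eq mult.commute)
  then show "1/(6*g) * S \<le> I" by simp
  have u1: "hx*hy*P \<le> hx*hy*(3*X/2)" by (rule mult_left_mono[OF pX(2) hh])
  have u2: "hx*hy*Q \<le> hx*hy*(3*Y/2)" by (rule mult_left_mono[OF pY(2) hh])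
  have u3: "hx*hy*X \<le> g*hx^2*X" using mult_right_mono[OF h3 X0(1)] by simp
  have u4: "hx*hy*Y \<le> g*hy^2*Y" using mult_right_mono[OF h4 X0(2)] by simp
  show "I \<le> g/2 * S" unfolding S2 I2 using u1 u2 u3 u4 by (simp add: algebra_simps)
qed

lemma int1d:
  fixes u v m a b k :: real
  assumes "u \<le> v"
  shows "((\<lambda>t. m * (a+b * t)^2 + k) has_integral
     (v-u) * (m * ((a+b * u)^2+(a+b * u) * (a+b * v)+(a+b * v)^2)/3 + k)) {u..v}"
proof -
  let ?F = "\<lambda>t. m * (a^2 * t + a * b * t^2 + b^2 * t^3/3) + k * t"
  have d: "(?F has_vector_derivative (m * (a+b * t)^2 + k)) (at t within {u..v})" for t
    unfolding has_real_derivative_iff_has_vector_derivative[symmetric]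
    by (rule derivative_eq_intros refl | simp)+ (simp add: power2_eq_square algebra_simps)
  have "((\<lambda>t. m * (a+b * t)^2 + k) has_integral (?F v - ?F u)) {u..v}"
    by (rule fundamental_theorem_of_calculus[OF assms]) (use d in auto)
  moreover have "?F v - ?F u = (v-u) * (m * ((a+b * u)^2+(a+b * u) * (a+b * v)+(a+b * v)^2)/3 + k)"
    by (simp add: power2_eq_square power3_eq_cube field_simps)
  ultimately show ?thesis by simp
qed

lemma int2d:
  fixes x1 x2 y1 y2 c1 c2 c3 :: real
  assumes "x1 \<le> x2" "y1 \<le> y2"
  shows "integral ({x1..x2}\<times>{y1..y2}) (\<lambda>p. (c1 + c3 * snd p)^2 + (c2 + c3 * fst p)^2)
    = (x2-x1) * (y2-y1) * (((c1+c3 * y1)^2+(c1+c3 * y1) * (c1+c3 * y2)+(c1+c3 * y2)^2)/3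
        + ((c2+c3 * x1)^2+(c2+c3 * x1) * (c2+c3 * x2)+(c2+c3 * x2)^2)/3)"
proof -
  let ?P = "((c1+c3 * y1)^2+(c1+c3 * y1) * (c1+c3 * y2)+(c1+c3 * y2)^2)"
  let ?Q = "((c2+c3 * x1)^2+(c2+c3 * x1) * (c2+c3 * x2)+(c2+c3 * x2)^2)"
  have c: "continuous_on (cbox (x1,y1) (x2,y2)) (\<lambda>p. (c1 + c3 * snd p)^2 + (c2 + c3 * fst p)^2)"
    by (intro continuous_intros)
  have inner: "integral {y1..y2} (\<lambda>y. (c1 + c3 * y)^2 + (c2 + c3 * x)^2) = (y2-y1) * ?P/3 + (y2-y1) * (c2+c3 * x)^2" for x
  proof -
    have "((\<lambda>y. 1 * (c1 + c3 * y)^2 + (c2 + c3 * x)^2) has_integral (y2-y1) * (1 * ?P/3 + (c2+c3 * x)^2)) {y1..y2}"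
      by (rule int1d[OF assms(2)])
    then show ?thesis by (simp add: integral_unique algebra_simps)
  qed
  have outer: "integral {x1..x2} (\<lambda>x. (y2-y1) * ?P/3 + (y2-y1) * (c2+c3 * x)^2) = (x2-x1) * ((y2-y1) * ?Q/3 + (y2-y1) * ?P/3)"
  proof -
    have "((\<lambda>x. (y2-y1) * (c2 + c3 * x)^2 + (y2-y1) * ?P/3) has_integral (x2-x1) * ((y2-y1) * ?Q/3 + (y2-y1) * ?P/3)) {x1..x2}"
      by (rule int1d[OF assms(1)])
    then show ?thesis by (simp add: integral_unique algebra_simps)
  qed
  have "integral ({x1..x2}\<times>{y1..y2}) (\<lambda>p. (c1 + c3 * snd p)^2 + (c2 + c3 * fst p)^2)
     = integral (cbox (x1,y1) (x2,y2)) (\<lambda>p. (c1 + c3 * snd p)^2 + (c2 + c3 * fst p)^2)"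
    by (simp add: cbox_Pair_eq)
  also have "\<dots> = integral {x1..x2} (\<lambda>x. integral {y1..y2} (\<lambda>y. (c1 + c3 * y)^2 + (c2 + c3 * x)^2))"
    using integral_prod_continuous[OF c] by simp
  also have "\<dots> = (x2-x1) * ((y2-y1) * ?Q/3 + (y2-y1) * ?P/3)" unfolding inner outer ..
  finally show ?thesis by (simp add: algebra_simps)
qed
lemma boxP: "box (x1::real,y1) (x2,y2) = {x1<..<x2}\<times>{y1<..<y2::real}"
  by (auto simp: box_def Basis_prod_def inner_Pair ball_Un Basis_real_def)
lemma cboxP: "cbox (x1::real,y1::real) (x2,y2) = {x1..x2}\<times>{y1..y2}"
  by (metis cbox_Pair_eq cbox_interval)
lemma neglK: "negligible ({x1..x2::real}\<times>{y1..y2::real} - {x1<..<x2}\<times>{y1<..<y2})"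
  using negligible_frontier_interval[of "(x1,y1)" "(x2,y2)"] unfolding cboxP boxP .

lemma elem:
  fixes x1 x2 y1 y2 c0 c1 c2 c3 g :: real
  assumes "x1 < x2" "y1 < y2" "K = {x1..x2}\<times>{y1..y2}"
    and qd: "\<forall>x y. q (x,y) = c0 + c1*x + c2*y + c3*x*y" and wq: "\<forall>p\<in>K. w p = q p"
    and "x2 - x1 \<le> g * (y2 - y1)" "y2 - y1 \<le> g * (x2 - x1)"
  shows "(grad_sq w has_integral semi1K_sq w K) K"
    "1/(6*g) * semi1hK_sq w K \<le> semi1K_sq w K" "semi1K_sq w K \<le> g/2 * semi1hK_sq w K"
proof -
  let ?f = "\<lambda>p. (c1 + c3 * snd p)^2 + (c2 + c3 * fst p)^2"
  have eq: "grad_sq w p = ?f p" if pin: "p \<in> {x1<..<x2}\<times>{y1<..<y2}" for p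
  proof -
    obtain x y where p: "p = (x,y)" by fastforce
    have xy: "x1 < x" "x < x2" "y1 < y" "y < y2" using pin p by auto
    have q1: "((\<lambda>t. q (t,y)) has_real_derivative (c1 + c3 * y)) (at x)"
    proof -
      have "(\<lambda>t. q (t,y)) = (\<lambda>t. c0 + c1*t + c2*y + c3*t*y)" using qd by auto
      moreover have "((\<lambda>t. c0 + c1*t + c2*y + c3*t*y) has_real_derivative (c1 + c3 * y)) (at x)"
        by (auto intro!: derivative_eq_intros)
      ultimately show ?thesis by simp
    qed
    have d1: "((\<lambda>t. w (t,y)) has_real_derivative (c1 + c3 * y)) (at x)"
      by (rule has_field_derivative_transform_within_open[OF q1, of "{x1<..<x2}"])
        (use xy wq assms(3) in auto)
    have q2: "((\<lambda>t. q (x,t)) has_real_derivative (c2 + c3 * x)) (at y)"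
    proof -
      have "(\<lambda>t. q (x,t)) = (\<lambda>t. c0 + c1*x + c2*t + c3*x*t)" using qd by auto
      moreover have "((\<lambda>t. c0 + c1*x + c2*t + c3*x*t) has_real_derivative (c2 + c3 * x)) (at y)"
        by (auto intro!: derivative_eq_intros)
      ultimately show ?thesis by simp
    qed
    have d2: "((\<lambda>t. w (x,t)) has_real_derivative (c2 + c3 * x)) (at y)"
      by (rule has_field_derivative_transform_within_open[OF q2, of "{y1<..<y2}"])
        (use xy wq assms(3) in auto)
    show ?thesis using DERIV_imp_deriv[OF d1] DERIV_imp_deriv[OF d2] p
      by (simp add: grad_sq_def)
  qed
  have Kc: "K = cbox (x1,y1) (x2,y2)" using assms(3) by (simp only: cboxP)
  have "?f integrable_on K" unfolding Kc by (intro integrable_continuous continuous_intros)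
  then have fi: "(?f has_integral integral K ?f) K" by (simp add: has_integral_integral)
  have gi: "(grad_sq w has_integral integral K ?f) K"
    by (rule has_integral_spike[OF neglK[of x1 x2 y1 y2] _ fi]) (use eq assms(3) in auto)
  then show "(grad_sq w has_integral semi1K_sq w K) K"
    by (simp add: semi1K_sq_def integral_unique)
  have I: "semi1K_sq w K = (x2-x1)*(y2-y1)*(((c1+c3*y1)^2+(c1+c3*y1)*(c1+c3*y2)+(c1+c3*y2)^2)/3
        + ((c2+c3*x1)^2+(c2+c3*x1)*(c2+c3*x2)+(c2+c3*x2)^2)/3)"
    using integral_unique[OF gi] int2d[of x1 x2 y1 y2 c1 c3 c2] assms(1,2,3)
    by (simp add: semi1K_sq_def)
  have vals: "w (x1,y1) = q (x1,y1)" "w (x2,y1) = q (x2,y1)" "w (x2,y2) = q (x2,y2)" "w (x1,y2) = q (x1,y2)"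
    using wq assms(1-3) by auto
  have S: "semi1hK_sq w K = (x2-x1)^2*((c1+c3*y1)^2+(c1+c3*y2)^2) + (y2-y1)^2*((c2+c3*x1)^2+(c2+c3*x2)^2)"
  proof -
    have e1: "w (x2,y1) - w (x1,y1) = (x2-x1)*(c1+c3*y1)" unfolding vals using qd by (simp add: algebra_simps)
    have e2: "w (x2,y2) - w (x2,y1) = (y2-y1)*(c2+c3*x2)" unfolding vals using qd by (simp add: algebra_simps)
    have e3: "w (x2,y2) - w (x1,y2) = (x2-x1)*(c1+c3*y2)" unfolding vals using qd by (simp add: algebra_simps)
    have e4: "w (x1,y2) - w (x1,y1) = (y2-y1)*(c2+c3*x1)" unfolding vals using qd by (simp add: algebra_simps)
    show ?thesis
      unfolding semi1hK_sq_def rect_bounds[OF assms(1-3)] Let_def e1 e2 e3 e4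
      by (simp only: power_mult_distrib distrib_left[of "(x2-x1)^2"] distrib_left[of "(y2-y1)^2"] add_ac)
  qed
  have hx: "0 < x2 - x1" and hy: "0 < y2 - y1" using assms by auto
  note ii = ineq[OF hx hy assms(6,7), of "c1+c3*y1" "c1+c3*y2" "c2+c3*x1" "c2+c3*x2"]
  show "1/(6*g) * semi1hK_sq w K \<le> semi1K_sq w K" using ii(1) unfolding I S .
  show "semi1K_sq w K \<le> g/2 * semi1hK_sq w K" using ii(2) unfolding I S .
qed


lemma rect_int:
  assumes "is_rect K"
  shows "closure (interior K) = K" "negligible (K - interior K)"
proof -
  obtain x1 x2 y1 y2 :: real where r: "x1 < x2" "y1 < y2" "K = {x1..x2}\<times>{y1..y2}"
    using assms unfolding is_rect_def by blast
  have i: "interior K = {x1<..<x2}\<times>{y1<..<y2}" using r by (simp add: interior_Times)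
  show "closure (interior K) = K" unfolding i using r by (simp add: closure_Times)
  show "negligible (K - interior K)" unfolding i using neglK[of x1 x2 y1 y2] by (simp add: r)
qed

lemma gsq_nonneg: "0 \<le> grad_sq w p" by (simp add: grad_sq_def)

lemma hK_nonneg: "0 \<le> semi1hK_sq w K" by (simp add: semi1hK_sq_def Let_def)

theorem lemma4p1:
  fixes a1 b1 a2 b2 \<gamma> :: real
    and \<Omega> :: "(real \<times> real) set"
    and T :: "(real \<times> real) set set"
    and w :: "real \<times> real \<Rightarrow> real"
  assumes "a1 < b1" and "a2 < b2"
    and "\<Omega> = {a1<..<b1} \<times> {a2<..<b2}"
    and "conforming_rect_partition T \<Omega>"
    and "\<forall>K\<in>T. diameter K / rho K \<le> \<gamma>"
    and "w \<in> Uh T \<Omega>"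
  shows "(\<forall>K\<in>T. 1 / (6 * \<gamma>) * semi1hK_sq w K \<le> semi1K_sq w K \<and>
                semi1K_sq w K \<le> \<gamma> / 2 * semi1hK_sq w K)
         \<and> 1 / (6 * \<gamma>) * (semi1h w T)\<^sup>2 \<le> (semi1 w \<Omega>)\<^sup>2
         \<and> (semi1 w \<Omega>)\<^sup>2 \<le> \<gamma> / 2 * (semi1h w T)\<^sup>2"
proof -
  note C = assms(4)[unfolded conforming_rect_partition_def]
  have fin: "finite T" using conjunct1[OF C] .
  have rect: "\<forall>K\<in>T. is_rect K" using conjunct1[OF conjunct2[OF C]] .
  have un: "\<Union>T = closure \<Omega>" using conjunct1[OF conjunct2[OF conjunct2[OF C]]] .
  have disj: "\<forall>K\<in>T. \<forall>K'\<in>T. K \<noteq> K' \<longrightarrow> interior K \<inter> interior K' = {}"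
    using conjunct2[OF conjunct2[OF conjunct2[OF C]]] by blast
  have H: "(grad_sq w has_integral semi1K_sq w K) K \<and>
      1/(6*\<gamma>) * semi1hK_sq w K \<le> semi1K_sq w K \<and> semi1K_sq w K \<le> \<gamma>/2 * semi1hK_sq w K"
    if K: "K \<in> T" for K
  proof -
    obtain x1 x2 y1 y2 :: real where r: "x1 < x2" "y1 < y2" "K = {x1..x2}\<times>{y1..y2}"
      using rect K unfolding is_rect_def by blast
    obtain q where q: "q \<in> Q1" "\<forall>p\<in>K. w p = q p" using assms(6) K unfolding Uh_def by blast
    obtain c0 c1 c2 c3 where qd: "\<forall>x y. q (x,y) = c0 + c1*x + c2*y + c3*x*y"
      using q(1) unfolding Q1_def by blast
    have g: "x2 - x1 \<le> \<gamma> * (y2 - y1)" "y2 - y1 \<le> \<gamma> * (x2 - x1)"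
      using gamma_bounds[OF r] assms(5) K by auto
    show ?thesis using elem[OF r qd q(2) g] by blast
  qed
  have pw: "pairwise (\<lambda>S S'. negligible (S \<inter> S')) T"
    unfolding pairwise_def
  proof (intro ballI impI)
    fix K K' assume KK: "K \<in> T" "K' \<in> T" "K \<noteq> K'"
    have "interior K \<inter> interior K' = {}" using disj KK by blast
    then have "interior K \<inter> closure (interior K') = {}"
      by (simp add: open_Int_closure_eq_empty)
    then have "interior K \<inter> K' = {}" using rect_int(1)[of K'] rect KK by simp
    then have "K \<inter> K' \<subseteq> K - interior K" by blast
    then show "negligible (K \<inter> K')" using rect_int(2)[of K] rect KK negligible_subset by blast
  qed
  have U: "(grad_sq w has_integral (\<Sum>K\<in>T. semi1K_sq w K)) (closure \<Omega>)"
    using has_integral_Union[OF fin _ pw, of "grad_sq w" "semi1K_sq w"] H un by auto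
  have cl: "closure \<Omega> = {a1..b1}\<times>{a2..b2}" using assms(1-3) by (simp add: closure_Times)
  have "(grad_sq w has_integral (\<Sum>K\<in>T. semi1K_sq w K)) \<Omega>"
  proof -
    have "negligible {x \<in> closure \<Omega> - \<Omega>. grad_sq w x \<noteq> 0}"
      by (rule negligible_subset[OF neglK[of a1 b1 a2 b2]]) (use cl assms(3) in auto)
    moreover have "negligible {x \<in> \<Omega> - closure \<Omega>. grad_sq w x \<noteq> 0}"
    proof -
      have "{x \<in> \<Omega> - closure \<Omega>. grad_sq w x \<noteq> 0} = {}" using closure_subset[of \<Omega>] by blast
      then show ?thesis by (simp only: negligible_empty)
    qed
    ultimately show ?thesis using has_integral_spike_set_eq U by blast
  qed
  then have IO: "integral \<Omega> (grad_sq w) = (\<Sum>K\<in>T. semi1K_sq w K)" by (rule integral_unique)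
  have Kn: "0 \<le> semi1K_sq w K" if "K \<in> T" for K
    using H[OF that] has_integral_nonneg gsq_nonneg by blast
  have s1: "(semi1 w \<Omega>)\<^sup>2 = (\<Sum>K\<in>T. semi1K_sq w K)"
    unfolding semi1_def IO using Kn by (simp add: sum_nonneg)
  have s2: "(semi1h w T)\<^sup>2 = (\<Sum>K\<in>T. semi1hK_sq w K)"
    unfolding semi1h_def using hK_nonneg by (simp add: sum_nonneg)
  have l: "1/(6*\<gamma>) * (\<Sum>K\<in>T. semi1hK_sq w K) \<le> (\<Sum>K\<in>T. semi1K_sq w K)"
    unfolding sum_distrib_left using H by (intro sum_mono) blast
  have u: "(\<Sum>K\<in>T. semi1K_sq w K) \<le> \<gamma>/2 * (\<Sum>K\<in>T. semi1hK_sq w K)"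
    unfolding sum_distrib_left using H by (intro sum_mono) blast
  show ?thesis using H l u unfolding s1 s2 by blast
qed

end
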